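(* Let $\varphi(\bm x,\bm y,w,\bm z)$ be a $w$-simple Presburger formula (with $\bm u=(\bm x,\bm y,\bm z)$ in the definition below), where $w$ is a single variable and $\bm x,\bm y$ have the same length. Then over $\mathbb{Z}$ the formulas $\exists^{\mathsf{ram}}\bm x,\bm y\colon\exists w\colon\varphi(\bm x,\bm y,w,\bm z)$ and $\exists^{\mathsf{ram}}(\bm x,v_1,v_2),(\bm y,w_1,w_2)\colon\varphi(\bm x,\bm y,v_1+w_2,\bm z)\wedge\bm x\neq\bm y$ are equivalent, where $v_1,v_2,w_1,w_2$ are fresh single variables.
   Context: Work over $\mathbb{Z}$ in the structure $\langle\mathbb{Z};+,<,0,1,(\equiv_e)_{e>0}\rangle$, where the modulo constraint $s\equiv_e t$ holds iff $e$ divides $s-t$. For a vector of variables $\bm u$ and a variable $w$, a formula $\varphi(\bm u,w)$ is $w$-simple if it is a Boolean combination of atoms of the forms $\bm r^\top\bm u+c<w$, $w<\bm r^\top\bm u+c$ (with $\bm r$ an integer vector and $c\in\mathbb{Z}$) and modulo constraints over $\bm u$ and $w$. Ramsey quantifier: $\exists^{\mathsf{ram}}\bm x,\bm y\colon\psi(\bm x,\bm y,\bm z)$ holds for $\bm c$ iff there is an infinite sequence of pairwise distinct integer vectors $(\bm a_i)_{i\ge1}$ with $\psi(\bm a_i,\bm a_j,\bm c)$ for all $i<j$. *)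

theory Defs
  imports Main
begin

text \<open>Linear forms over a vector of integer variables u, given by a coefficient list.
  (Coefficient lists shorter/longer than u are harmless: zip truncates, which is the
  same as padding with zero coefficients.)\<close>
definition dot :: "int list \<Rightarrow> int list \<Rightarrow> int" where
  "dot r u = sum_list (map2 (*) r u)"

text \<open>Syntax of w-simple formulas \<phi>(u,w):
  LtW r c      :  r.u + c < w
  GtW r c      :  w < r.u + c
  ModW e r b c :  r.u + b*w + c \<equiv>_e 0   (a modulo constraint over u and w, e > 0;
                  any s \<equiv>_e t with linear terms s,t is of this form via s - t)\<close>
datatype wsimple =
    LtW "int list" int
  | GtW "int list" int
  | ModW int "int list" int int
  | NegW wsimple
  | AndW wsimple wsimple
  | OrW wsimple wsimple

primrec wsat :: "wsimple \<Rightarrow> int list \<Rightarrow> int \<Rightarrow> bool" where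
  "wsat (LtW r c) u w = (dot r u + c < w)"
| "wsat (GtW r c) u w = (w < dot r u + c)"
| "wsat (ModW e r b c) u w = (e > 0 \<and> e dvd (dot r u + b * w + c))"
| "wsat (NegW f) u w = (\<not> wsat f u w)"
| "wsat (AndW f g) u w = (wsat f u w \<and> wsat g u w)"
| "wsat (OrW f g) u w = (wsat f u w \<or> wsat g u w)"

definition ramsey_on :: "'a set \<Rightarrow> ('a \<Rightarrow> 'a \<Rightarrow> bool) \<Rightarrow> bool" where
  "ramsey_on A R \<longleftrightarrow> (\<exists>a :: nat \<Rightarrow> 'a. inj a \<and> (\<forall>i. a i \<in> A) \<and> (\<forall>i j. i < j \<longrightarrow> R (a i) (a j)))"

end

theory Submission
  imports Defs "HOL-Library.Ramsey" "HOL-Library.Infinite_Set"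
begin

primrec atomsW :: "wsimple \<Rightarrow> (int list \<times> int) list" where
  "atomsW (LtW r c) = [(r,c)]"
| "atomsW (GtW r c) = [(r,c)]"
| "atomsW (ModW e r b c) = []"
| "atomsW (NegW f) = atomsW f"
| "atomsW (AndW f g) = atomsW f @ atomsW g"
| "atomsW (OrW f g) = atomsW f @ atomsW g"

primrec modsW :: "wsimple \<Rightarrow> int" where
  "modsW (LtW r c) = 1"
| "modsW (GtW r c) = 1"
| "modsW (ModW e r b c) = (if e > 0 then e else 1)"
| "modsW (NegW f) = modsW f"
| "modsW (AndW f g) = modsW f * modsW g"
| "modsW (OrW f g) = modsW f * modsW g"

lemma modsW_pos: "modsW f > 0"
  by (induction f) auto

lemma wsat_cong:
  assumes "\<forall>(r,c)\<in>set (atomsW f). (w < dot r u + c \<longleftrightarrow> w' < dot r u + c) \<and> (dot r u + c < w \<longleftrightarrow> dot r u + c < w')"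
    and "modsW f dvd (w - w')"
  shows "wsat f u w = wsat f u w'"
  using assms
proof (induction f)
  case (ModW e r b c)
  show ?case
  proof (cases "e > 0")
    case True
    then have "e dvd (w - w')" using ModW by simp
    then have ed: "e dvd b * (w - w')" by (rule dvd_mult)
    have eq: "dot r u + b * w + c = (dot r u + b * w' + c) + b * (w - w')"
      by (simp add: algebra_simps)
    have "e dvd (dot r u + b * w + c) \<longleftrightarrow> e dvd (dot r u + b * w' + c)"
      using dvd_add_left_iff[OF ed, of "dot r u + b * w' + c"] unfolding eq[symmetric] .
    then show ?thesis by simp
  qed simp
next
  case (AndW f g)
  have "modsW f dvd (w - w')" "modsW g dvd (w - w')"
    using AndW.prems(2) dvd_mult_left[of "modsW f" "modsW g"] dvd_mult_right[of "modsW f" "modsW g"]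
    by (simp_all add: dvd_trans)
  then show ?case using AndW by simp
next
  case (OrW f g)
  have "modsW f dvd (w - w')" "modsW g dvd (w - w')"
    using OrW.prems(2) dvd_mult_left[of "modsW f" "modsW g"] dvd_mult_right[of "modsW f" "modsW g"]
    by (simp_all add: dvd_trans)
  then show ?case using OrW by simp
qed auto

lemma pick:
  fixes T :: "int set" and M w0 :: int
  assumes fin: "finite T" and M: "M > 0"
  shows "\<exists>p\<in>insert 0 T. \<exists>d. \<bar>d\<bar> \<le> M \<and> M dvd (p + d - w0) \<and>
           (\<forall>q\<in>T. (p + d < q \<longleftrightarrow> w0 < q) \<and> (q < p + d \<longleftrightarrow> q < w0))"
proof (cases "w0 \<in> T")
  case True
  then show ?thesis using M by (intro bexI[of _ w0] exI[of _ 0]) auto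
next
  case nT: False
  show ?thesis
  proof (cases "\<exists>q\<in>T. q < w0")
    case True
    define P where "P = {q\<in>T. q < w0}"
    have finP: "finite P" "P \<noteq> {}" using fin True by (auto simp: P_def)
    define L where "L = Max P"
    have LP: "L \<in> P" using finP by (simp add: L_def)
    have Lmax: "\<And>q. q \<in> P \<Longrightarrow> q \<le> L" using finP by (simp add: L_def)
    define d where "d = (w0 - L - 1) mod M + 1"
    have "(w0 - L - 1) mod M < M" "0 \<le> (w0 - L - 1) mod M" using M by simp_all
    then have d1: "1 \<le> d" "d \<le> M" unfolding d_def by linarith+
    have "(w0 - L - 1) mod M \<le> w0 - L - 1" using LP M by (intro zmod_le_nonneg_dividend) (auto simp: P_def)
    then have dle: "L + d \<le> w0" by (simp add: d_def)
    have dv: "M dvd (L + d - w0)"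
    proof -
      have "L + d - w0 = - ((w0 - L - 1) - (w0 - L - 1) mod M)" unfolding d_def by linarith
      moreover have "M dvd ((w0 - L - 1) - (w0 - L - 1) mod M)" by (rule dvd_minus_mod)
      ultimately show ?thesis by (simp only: dvd_minus_iff)
    qed
    have "\<forall>q\<in>T. (L + d < q \<longleftrightarrow> w0 < q) \<and> (q < L + d \<longleftrightarrow> q < w0)"
    proof
      fix q assume q: "q \<in> T"
      show "(L + d < q \<longleftrightarrow> w0 < q) \<and> (q < L + d \<longleftrightarrow> q < w0)"
      proof (cases "q < w0")
        case True
        then have "q \<le> L" using Lmax q by (auto simp: P_def)
        then show ?thesis using True d1 by auto
      next
        case False
        then have "w0 < q" using nT q by (cases "q = w0") auto
        then show ?thesis using dle by auto
      qed
    qed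
    moreover have "L \<in> insert 0 T" using LP by (auto simp: P_def)
    ultimately show ?thesis using d1 dv by (intro bexI[of _ L] exI[of _ d]) auto
  next
    case False
    have all: "\<forall>q\<in>T. w0 < q"
    proof
      fix q assume q: "q \<in> T"
      then have "q \<noteq> w0" "\<not> q < w0" using nT False by auto
      then show "w0 < q" by linarith
    qed
    show ?thesis
    proof (cases "T = {}")
      case True
      have "M dvd (0 + w0 mod M - w0)" by (simp add: mod_eq_dvd_iff[symmetric])
      moreover have "\<bar>w0 mod M\<bar> \<le> M" using M by (simp add: abs_of_nonneg less_imp_le)
      ultimately show ?thesis using True by (intro bexI[of _ 0] exI[of _ "w0 mod M"]) auto
    next
      case Tne: False
      define U where "U = Min T"
      have UT: "U \<in> T" using fin Tne by (simp add: U_def)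
      have Umin: "\<And>q. q \<in> T \<Longrightarrow> U \<le> q" using fin by (simp add: U_def)
      define e where "e = (U - w0 - 1) mod M + 1"
      have "(U - w0 - 1) mod M < M" "0 \<le> (U - w0 - 1) mod M" using M by simp_all
      then have e1: "1 \<le> e" "e \<le> M" unfolding e_def by linarith+
      have "(U - w0 - 1) mod M \<le> U - w0 - 1" using UT all M by (intro zmod_le_nonneg_dividend) auto
      then have ege: "w0 \<le> U - e" by (simp add: e_def)
      have dv: "M dvd (U + - e - w0)"
      proof -
        have "U + - e - w0 = (U - w0 - 1) - (U - w0 - 1) mod M" unfolding e_def by linarith
        moreover have "M dvd ((U - w0 - 1) - (U - w0 - 1) mod M)" by (rule dvd_minus_mod)
        ultimately show ?thesis by metis
      qed
      have "\<forall>q\<in>T. (U + - e < q \<longleftrightarrow> w0 < q) \<and> (q < U + - e \<longleftrightarrow> q < w0)"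
        using Umin all e1 ege by force
      then show ?thesis using UT e1 dv by (intro bexI[of _ U] exI[of _ "- e"]) auto
    qed
  qed
qed

lemma exists_canonical:
  assumes "wsat f u w0"
  shows "\<exists>r c d. (r, c) \<in> set (([], 0) # atomsW f) \<and> d \<in> {- modsW f .. modsW f}
            \<and> wsat f u (dot r u + c + d)"
proof -
  define T where "T = (\<lambda>(r,c). dot r u + c) ` set (atomsW f)"
  have fin: "finite T" by (simp add: T_def)
  obtain p d where p: "p \<in> insert 0 T" and d: "\<bar>d\<bar> \<le> modsW f" "modsW f dvd (p + d - w0)"
    and q: "\<forall>q\<in>T. (p + d < q \<longleftrightarrow> w0 < q) \<and> (q < p + d \<longleftrightarrow> q < w0)"
    using pick[OF fin modsW_pos[of f], of w0] by blast
  have qa: "(p + d < dot r u + c \<longleftrightarrow> w0 < dot r u + c) \<and> (dot r u + c < p + d \<longleftrightarrow> dot r u + c < w0)"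
    if "(r, c) \<in> set (atomsW f)" for r c
  proof -
    have "dot r u + c \<in> T" unfolding T_def by (rule rev_image_eqI[OF that]) simp
    then show ?thesis using q by blast
  qed
  have "wsat f u (p + d) = wsat f u w0"
  proof (rule wsat_cong)
    show "\<forall>(r,c)\<in>set (atomsW f). (p + d < dot r u + c \<longleftrightarrow> w0 < dot r u + c) \<and> (dot r u + c < p + d \<longleftrightarrow> dot r u + c < w0)"
      using qa by blast
    show "modsW f dvd (p + d - w0)" by (rule d(2))
  qed
  then have ws: "wsat f u (p + d)" using assms by simp
  have "\<exists>r c. (r, c) \<in> set (([], 0) # atomsW f) \<and> p = dot r u + c"
  proof (cases "p = 0")
    case True
    then show ?thesis by (intro exI[of _ "[]"] exI[of _ 0]) (simp add: dot_def)
  next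
    case False
    then have "p \<in> T" using p by simp
    then obtain r c where "(r, c) \<in> set (atomsW f)" "p = dot r u + c" unfolding T_def by auto
    then show ?thesis by auto
  qed
  then obtain r c where rc: "(r, c) \<in> set (([], 0) # atomsW f)" "p = dot r u + c" by blast
  have "d \<in> {- modsW f .. modsW f}" using d(1) by (simp add: abs_le_iff)
  then show ?thesis using rc ws by (intro exI[of _ r] exI[of _ c] exI[of _ d]) auto
qed

lemma dot_append:
  "dot r (x @ v) = dot (take (length x) r) x + dot (drop (length x) r) v"
proof (induction x arbitrary: r)
  case Nil then show ?case by (simp add: dot_def)
next
  case (Cons a x)
  then show ?case by (cases r) (auto simp: dot_def)
qed

theorem mainTheorem4:
  fixes \<phi> :: wsimple and n :: nat and z :: "int list"
  shows "ramsey_on {x :: int list. length x = n}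
            (\<lambda>x y. \<exists>w. wsat \<phi> (x @ y @ z) w)
     \<longleftrightarrow> ramsey_on ({x :: int list. length x = n} \<times> (UNIV :: int set) \<times> (UNIV :: int set))
            (\<lambda>(x, v1, v2) (y, w1, w2). wsat \<phi> (x @ y @ z) (v1 + w2) \<and> x \<noteq> y)"
proof
  assume "ramsey_on {x :: int list. length x = n} (\<lambda>x y. \<exists>w. wsat \<phi> (x @ y @ z) w)"
  then obtain a :: "nat \<Rightarrow> int list" where inja: "inj a" and lena: "\<And>i. length (a i) = n"
    and Ra: "\<And>i j. i < j \<Longrightarrow> \<exists>w. wsat \<phi> (a i @ a j @ z) w"
    unfolding ramsey_on_def by auto
  define CL where "CL = map (\<lambda>((r, c), d). (r, c, d)) (List.product (([], 0) # atomsW \<phi>) [- modsW \<phi> .. modsW \<phi>])"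
  define good where "good k i j = (let u = a i @ a j @ z in
      wsat \<phi> u (dot (fst (CL ! k)) u + fst (snd (CL ! k)) + snd (snd (CL ! k))))" for k i j
  have ex: "\<exists>k < length CL. good k i j" if ij: "i < j" for i j
  proof -
    obtain w where "wsat \<phi> (a i @ a j @ z) w" using Ra[OF ij] by blast
    from exists_canonical[OF this] obtain r c d where
      rc: "(r, c) \<in> set (([], 0) # atomsW \<phi>)" "d \<in> {- modsW \<phi> .. modsW \<phi>}"
      and ws: "wsat \<phi> (a i @ a j @ z) (dot r (a i @ a j @ z) + c + d)" by blast
    have "((r, c), d) \<in> set (List.product (([], 0) # atomsW \<phi>) [- modsW \<phi> .. modsW \<phi>])"
      unfolding set_product using rc by (simp only: mem_Times_iff fst_conv snd_conv) simp
    then have "(r, c, d) \<in> set CL" unfolding CL_def set_map by (rule rev_image_eqI) simp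
    then obtain k where "k < length CL" "CL ! k = (r, c, d)" by (metis in_set_conv_nth)
    then show ?thesis using ws by (auto simp: good_def Let_def)
  qed
  define f where "f S = (LEAST k. k < length CL \<and> good k (Min S) (Max S))" for S :: "nat set"
  have fpair: "f {i, j} < length CL \<and> good (f {i, j}) i j" if "i < j" for i j
  proof -
    have "Min {i, j} = i" "Max {i, j} = j" using that by auto
    then have "f {i, j} = (LEAST k. k < length CL \<and> good k i j)" by (simp add: f_def)
    then show ?thesis using LeastI_ex[OF ex[OF that]] by simp
  qed
  have part: "\<forall>x\<in>(UNIV :: nat set). \<forall>y\<in>UNIV. x \<noteq> y \<longrightarrow> f {x, y} < length CL"
  proof (intro ballI impI)
    fix x y :: nat assume "x \<noteq> y"
    then show "f {x, y} < length CL"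
      using fpair[of x y] fpair[of y x] by (cases "x < y") (auto simp: insert_commute)
  qed
  obtain Y t where Y: "infinite Y" "t < length CL"
    and hom: "\<forall>x\<in>Y. \<forall>y\<in>Y. x \<noteq> y \<longrightarrow> f {x, y} = t"
    using Ramsey2[OF infinite_UNIV_nat part] by blast
  define s where "s = enumerate Y"
  have smono: "\<And>i j. i < j \<Longrightarrow> s i < s j" using Y(1) by (simp add: s_def enumerate_mono)
  have sY: "\<And>i. s i \<in> Y" using Y(1) by (simp add: s_def enumerate_in_set)
  have goodt: "good t (s i) (s j)" if "i < j" for i j
  proof -
    have "s i < s j" using smono[OF that] .
    moreover have "f {s i, s j} = t" using hom sY \<open>s i < s j\<close> by auto
    ultimately show ?thesis using fpair[of "s i" "s j"] by simp
  qed
  obtain r c d where CLt: "CL ! t = (r, c, d)" by (metis prod_cases3)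
  define r1 where "r1 = take n r"
  define r2 where "r2 = take n (drop n r)"
  define r3 where "r3 = drop n (drop n r)"
  have dsplit: "dot r (x @ y @ z) = dot r1 x + dot r2 y + dot r3 z"
    if "length x = n" "length y = n" for x y
    using that by (simp add: dot_append r1_def r2_def r3_def)
  define b where "b i = (a (s i), dot r1 (a (s i)) + dot r3 z + c + d, dot r2 (a (s i)))" for i
  have injas: "inj (\<lambda>i. a (s i))"
  proof (rule injI)
    fix i j assume "a (s i) = a (s j)"
    then have "s i = s j" using inja by (simp add: inj_eq)
    then show "i = j" using smono by (metis linorder_neqE_nat less_irrefl)
  qed
  have "inj b"
  proof (rule injI)
    fix i j assume "b i = b j"
    then have "a (s i) = a (s j)" by (simp add: b_def)
    then show "i = j" using injD[OF injas] by blast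
  qed
  moreover have "\<forall>i. b i \<in> {x :: int list. length x = n} \<times> (UNIV :: int set) \<times> (UNIV :: int set)"
    by (simp add: b_def lena)
  moreover have "\<forall>i j. i < j \<longrightarrow> (\<lambda>(x, v1, v2) (y, w1, w2). wsat \<phi> (x @ y @ z) (v1 + w2) \<and> x \<noteq> y) (b i) (b j)"
  proof (intro allI impI)
    fix i j :: nat assume ij: "i < j"
    have g: "wsat \<phi> (a (s i) @ a (s j) @ z) (dot r (a (s i) @ a (s j) @ z) + c + d)"
      using goodt[OF ij] CLt by (simp add: good_def Let_def)
    have ne: "a (s i) \<noteq> a (s j)" using injas ij by (metis inj_eq less_irrefl)
    have eq: "dot r (a (s i) @ a (s j) @ z) + c + d
        = (dot r1 (a (s i)) + dot r3 z + c + d) + dot r2 (a (s j))"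
      using dsplit[OF lena lena] by simp
    have g2: "wsat \<phi> (a (s i) @ a (s j) @ z) ((dot r1 (a (s i)) + dot r3 z + c + d) + dot r2 (a (s j)))"
      using g unfolding eq .
    show "(\<lambda>(x, v1, v2) (y, w1, w2). wsat \<phi> (x @ y @ z) (v1 + w2) \<and> x \<noteq> y) (b i) (b j)"
      unfolding b_def using g2 ne by (simp only: prod.case) simp
  qed
  ultimately show "ramsey_on ({x :: int list. length x = n} \<times> (UNIV :: int set) \<times> (UNIV :: int set))
            (\<lambda>(x, v1, v2) (y, w1, w2). wsat \<phi> (x @ y @ z) (v1 + w2) \<and> x \<noteq> y)"
    unfolding ramsey_on_def by blast
next
  assume "ramsey_on ({x :: int list. length x = n} \<times> (UNIV :: int set) \<times> (UNIV :: int set))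
            (\<lambda>(x, v1, v2) (y, w1, w2). wsat \<phi> (x @ y @ z) (v1 + w2) \<and> x \<noteq> y)"
  then obtain b :: "nat \<Rightarrow> int list \<times> int \<times> int" where
    bin: "\<And>i. b i \<in> {x :: int list. length x = n} \<times> (UNIV :: int set) \<times> (UNIV :: int set)"
    and Rb: "\<And>i j. i < j \<Longrightarrow> (\<lambda>(x, v1, v2) (y, w1, w2). wsat \<phi> (x @ y @ z) (v1 + w2) \<and> x \<noteq> y) (b i) (b j)"
    unfolding ramsey_on_def by blast
  define a where "a i = fst (b i)" for i
  have R: "wsat \<phi> (a i @ a j @ z) (fst (snd (b i)) + snd (snd (b j))) \<and> a i \<noteq> a j" if "i < j" for i j
    using Rb[OF that] by (simp add: a_def split: prod.splits)
  have "inj a"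
  proof (rule injI)
    fix i j assume eq: "a i = a j"
    show "i = j"
    proof (rule ccontr)
      assume "i \<noteq> j"
      then show False using R[of i j] R[of j i] eq by (cases "i < j") auto
    qed
  qed
  moreover have "\<forall>i. a i \<in> {x :: int list. length x = n}" using bin by (auto simp: a_def mem_Times_iff)
  moreover have "\<forall>i j. i < j \<longrightarrow> (\<lambda>x y. \<exists>w. wsat \<phi> (x @ y @ z) w) (a i) (a j)"
    using R by blast
  ultimately show "ramsey_on {x :: int list. length x = n} (\<lambda>x y. \<exists>w. wsat \<phi> (x @ y @ z) w)"
    unfolding ramsey_on_def by blast
qed

end
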